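(* Let $r\ge1$ and $n\ge 3r$ be integers, let $P$ be the path on $n$ vertices and $G=P^r$ its $r$-th power. Then $\tau(G)=r$. Moreover, for every positive integer $k$ with $n\ge k^2(r+1)$, there is a (simple) coalition game $\mathcal G$ over $G$ with $\dfrac{\kappa(\mathcal G)}{\kappa^f(\mathcal G)}\ge\left(1-\frac2k\right)\tau(G)$.
   Context: The $r$-th power $P^r$ of the path $P$ with vertices $1,\dots,n$ in order is the graph on $\{1,\dots,n\}$ in which $i\ne j$ are adjacent iff $|i-j|\le r$. Coalition game over $G=(V,E)$: a valuation $v:2^V\to\mathbb Z_{\ge0}$ with $v(\emptyset)=0$, $v(S)=0$ whenever $G[S]$ is disconnected, $v$ not identically zero; simple if all values lie in $\{0,1\}$. $\kappa^f(\mathcal G)=\min\{\sum_{i\in V}x_i: x\in\mathbb R^V_{\ge0},\ \sum_{i\in S}x_i\ge v(S)\ \forall S\subseteq V\}$ and $\kappa(\mathcal G)$ the same minimum over $x\in\mathbb Z^V_{\ge0}$. Thicket number $\tau(G)$: maximum, over collections $\mathcal H$ of nonempty, connected-inducing, pairwise intersecting vertex sets, of the minimum size of a set meeting every member of $\mathcal H$. *)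

theory Defs
  imports "HOL-Analysis.Analysis"
begin

(* A simple graph: finite vertex set V and adjacency relation adj (assumed symmetric, irreflexive). *)

(* r-th power of the path 1,...,n: vertex set {1..n}, i~j iff i<>j and |i-j| <= r *)
definition path_power_adj :: "nat \<Rightarrow> nat \<Rightarrow> nat \<Rightarrow> bool" where
  "path_power_adj r i j \<longleftrightarrow> i \<noteq> j \<and> (i \<le> j + r \<and> j \<le> i + r)"

definition induced_connected :: "('a \<Rightarrow> 'a \<Rightarrow> bool) \<Rightarrow> 'a set \<Rightarrow> bool" where
  "induced_connected adj S \<longleftrightarrow> S \<noteq> {} \<and>
     (\<forall>x\<in>S. \<forall>y\<in>S. (x, y) \<in> ({(a, b). a \<in> S \<and> b \<in> S \<and> adj a b})\<^sup>*)"

definition coalition_game :: "'a set \<Rightarrow> ('a \<Rightarrow> 'a \<Rightarrow> bool) \<Rightarrow> ('a set \<Rightarrow> nat) \<Rightarrow> bool" where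
  "coalition_game V adj v \<longleftrightarrow> v {} = 0 \<and>
     (\<forall>S. S \<subseteq> V \<and> S \<noteq> {} \<and> \<not> induced_connected adj S \<longrightarrow> v S = 0) \<and>
     (\<exists>S. S \<subseteq> V \<and> v S \<noteq> 0)"

definition simple_game :: "'a set \<Rightarrow> ('a set \<Rightarrow> nat) \<Rightarrow> bool" where
  "simple_game V v \<longleftrightarrow> (\<forall>S. S \<subseteq> V \<longrightarrow> v S \<le> 1)"

definition kappa_f :: "'a set \<Rightarrow> ('a set \<Rightarrow> nat) \<Rightarrow> real" where
  "kappa_f V v = Inf {(\<Sum>i\<in>V. x i) | x :: 'a \<Rightarrow> real.
      (\<forall>i\<in>V. x i \<ge> 0) \<and> (\<forall>S. S \<subseteq> V \<longrightarrow> (\<Sum>i\<in>S. x i) \<ge> real (v S))}"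

definition kappa_int :: "'a set \<Rightarrow> ('a set \<Rightarrow> nat) \<Rightarrow> real" where
  "kappa_int V v = Inf {(\<Sum>i\<in>V. x i) | x :: 'a \<Rightarrow> real.
      (\<forall>i\<in>V. x i \<ge> 0 \<and> x i \<in> \<int>) \<and> (\<forall>S. S \<subseteq> V \<longrightarrow> (\<Sum>i\<in>S. x i) \<ge> real (v S))}"

definition transversal_number :: "'a set \<Rightarrow> 'a set set \<Rightarrow> nat" where
  "transversal_number V H = Min {card T | T. T \<subseteq> V \<and> (\<forall>A\<in>H. A \<inter> T \<noteq> {})}"

definition thicket_number :: "'a set \<Rightarrow> ('a \<Rightarrow> 'a \<Rightarrow> bool) \<Rightarrow> nat" where
  "thicket_number V adj = Max {transversal_number V H | H.
      (\<forall>A\<in>H. A \<subseteq> V \<and> A \<noteq> {} \<and> induced_connected adj A) \<and>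
      (\<forall>A\<in>H. \<forall>B\<in>H. A \<inter> B \<noteq> {})}"

end

theory Submission
  imports Defs
begin

lemma gap_conn:
  fixes T :: "nat set"
  assumes cT: "card (T \<inter> {a..b}) < r" and ne: "{a..b} - T \<noteq> {}"
  shows "induced_connected (path_power_adj r) ({a..b} - T)"
proof -
  define S where "S = {a..b} - T"
  define Rel where "Rel = {(u, w). u \<in> S \<and> w \<in> S \<and> path_power_adj r u w}"
  have fin: "finite (T \<inter> {a..b})" by simp
  have key: "\<forall>x\<in>S. x \<le> y \<longrightarrow> (x, y) \<in> Rel\<^sup>* \<and> (y, x) \<in> Rel\<^sup>*" if "y \<in> S" for y
    using that
  proof (induction y rule: less_induct)
    case (less y)
    show ?case
    proof (intro ballI impI)
      fix x assume xS: "x \<in> S" and xy: "x \<le> y"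
      show "(x, y) \<in> Rel\<^sup>* \<and> (y, x) \<in> Rel\<^sup>*"
      proof (cases "x = y")
        case True then show ?thesis by simp
      next
        case False
        hence xy': "x < y" using xy by simp
        define Z where "Z = {z \<in> S. z < y}"
        have finZ: "finite Z" unfolding Z_def S_def by (rule finite_subset[of _ "{a..b}"]) auto
        have xZ: "x \<in> Z" using xS xy' Z_def by simp
        define y' where "y' = Max Z"
        have y'Z: "y' \<in> Z" using finZ xZ y'_def Max_in by blast
        have xy'': "x \<le> y'" using finZ xZ y'_def Max_ge by blast
        have y'S: "y' \<in> S" and y'y: "y' < y" using y'Z Z_def by auto
        from less.IH[OF y'y y'S] xS xy'' have IH: "(x, y') \<in> Rel\<^sup>*" "(y', x) \<in> Rel\<^sup>*" by auto
        have sub: "{y'<..<y} \<subseteq> T \<inter> {a..b}"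
        proof
          fix z assume z: "z \<in> {y'<..<y}"
          have ab: "a \<le> x" "y \<le> b" using xS less.prems S_def by auto
          have zab: "z \<in> {a..b}" using z ab xy'' by auto
          show "z \<in> T \<inter> {a..b}"
          proof (rule ccontr)
            assume "z \<notin> T \<inter> {a..b}"
            hence "z \<in> Z" using zab z unfolding Z_def S_def by auto
            hence "z \<le> y'" using finZ y'_def Max_ge by blast
            thus False using z by simp
          qed
        qed
        have "card {y'<..<y} \<le> card (T \<inter> {a..b})" using card_mono[OF fin sub] .
        hence "y - y' - 1 < r" using cT by simp
        hence adj: "path_power_adj r y' y" "path_power_adj r y y'"
          using y'y unfolding path_power_adj_def by auto
        have e1: "(y', y) \<in> Rel" "(y, y') \<in> Rel" using adj y'S less.prems Rel_def by auto
        show ?thesis using IH e1 rtrancl_into_rtrancl converse_rtrancl_into_rtrancl by metis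
      qed
    qed
  qed
  show ?thesis
    unfolding induced_connected_def
  proof (intro conjI ballI)
    show "{a..b} - T \<noteq> {}" by (rule ne)
  next
    fix x y assume "x \<in> {a..b} - T" "y \<in> {a..b} - T"
    hence "x \<in> S" "y \<in> S" using S_def by auto
    then show "(x, y) \<in> {(u, w). u \<in> {a..b} - T \<and> w \<in> {a..b} - T \<and> path_power_adj r u w}\<^sup>*"
    proof (cases "x \<le> y")
      case True
      then show ?thesis using key[of y] \<open>x \<in> S\<close> \<open>y \<in> S\<close> unfolding Rel_def S_def by blast
    next
      case False
      then show ?thesis using key[of x] \<open>x \<in> S\<close> \<open>y \<in> S\<close> unfolding Rel_def S_def by auto
    qed
  qed
qed

lemma window_meet:
  assumes conn: "induced_connected (path_power_adj r) B"
    and ab: "a \<in> B" "b \<in> B" "a < s" "s + r \<le> b"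
  shows "\<exists>c\<in>B. s \<le> c \<and> c < s + r"
proof -
  define Rel where "Rel = {(u, w). u \<in> B \<and> w \<in> B \<and> path_power_adj r u w}"
  have path: "(a, b) \<in> Rel\<^sup>*" using conn ab unfolding induced_connected_def Rel_def by blast
  have gen: "(\<exists>c\<in>B. s \<le> c \<and> c < s + r) \<or> y < s" if "(a, y) \<in> Rel\<^sup>*" for y
    using that
  proof (induction rule: rtrancl_induct)
    case base then show ?case using ab by simp
  next
    case (step y z)
    have "z \<in> B" "path_power_adj r y z" using step.hyps(2) Rel_def by auto
    show ?case
    proof (cases "\<exists>c\<in>B. s \<le> c \<and> c < s + r")
      case True then show ?thesis by simp
    next
      case False
      with step.IH have "y < s" by simp
      with \<open>path_power_adj r y z\<close> have "z < s + r" unfolding path_power_adj_def by simp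
      with False \<open>z \<in> B\<close> show ?thesis by (meson not_less)
    qed
  qed
  show ?thesis using gen[OF path] ab by simp
qed


lemma trans_upper:
  fixes r n :: nat
  assumes r1: "r \<ge> 1" and nr: "n \<ge> r"
    and HV: "\<forall>A\<in>H. A \<subseteq> {1..n} \<and> A \<noteq> {} \<and> induced_connected (path_power_adj r) A"
    and Hi: "\<forall>A\<in>H. \<forall>B\<in>H. A \<inter> B \<noteq> {}"
  shows "transversal_number {1..n} H \<le> r"
proof -
  have finH: "finite H" using HV by (meson PowI finite_Pow_iff finite_atLeastAtMost finite_subset subsetI)
  obtain p where p1: "1 \<le> p" "p \<le> n" and pB: "\<forall>B\<in>H. (\<exists>a\<in>B. a \<le> p) \<and> (\<exists>b\<in>B. p \<le> b)"
  proof (cases "H = {}")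
    case True then show ?thesis using that[of 1] nr r1 by simp
  next
    case False
    define p where "p = Max ((\<lambda>A. Min A) ` H)"
    have "p \<in> (\<lambda>A. Min A) ` H" unfolding p_def using finH False by simp
    then obtain A0 where A0: "A0 \<in> H" "p = Min A0" by auto
    have finA: "finite A" if "A \<in> H" for A using HV that by (meson finite_atLeastAtMost finite_subset)
    have pA0: "p \<in> A0" using A0 HV finA[OF A0(1)] by simp
    have "p \<in> {1..n}" using pA0 A0(1) HV by blast
    hence pn: "1 \<le> p" "p \<le> n" by auto
    show ?thesis
    proof (rule that[OF pn], intro ballI conjI)
      fix B assume B: "B \<in> H"
      have "Min B \<le> p" unfolding p_def using finH B by (intro Max_ge) auto
      moreover have "Min B \<in> B" using finA[OF B] HV B by simp
      ultimately show "\<exists>a\<in>B. a \<le> p" by blast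
      obtain x where x: "x \<in> A0" "x \<in> B" using Hi A0(1) B by blast
      have "Min A0 \<le> x" using finA[OF A0(1)] x by simp
      then show "\<exists>b\<in>B. p \<le> b" using x A0 by blast
    qed
  qed
  define s where "s = min p (n + 1 - r)"
  define T where "T = {s..<s+r}"
  have s1: "1 \<le> s" "s \<le> p" "p < s + r" "s + r \<le> n + 1" using p1 nr r1 unfolding s_def by auto
  have TV: "T \<subseteq> {1..n}" using s1 unfolding T_def by auto
  have cT: "card T = r" unfolding T_def by simp
  have meet: "\<forall>A\<in>H. A \<inter> T \<noteq> {}"
  proof
    fix B assume B: "B \<in> H"
    obtain a b where ab: "a \<in> B" "a \<le> p" "b \<in> B" "p \<le> b" using pB B by blast
    show "B \<inter> T \<noteq> {}"
    proof (cases "s \<le> a")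
      case True then show ?thesis using ab s1 unfolding T_def by auto
    next
      case F1: False
      show ?thesis
      proof (cases "b < s + r")
        case True then show ?thesis using ab s1 unfolding T_def by auto
      next
        case False
        then obtain c where "c \<in> B" "s \<le> c" "c < s + r"
          using window_meet[of r B a b s] HV B ab F1 by auto
        then show ?thesis unfolding T_def by auto
      qed
    qed
  qed
  have fin: "finite {card T | T. T \<subseteq> {1..n} \<and> (\<forall>A\<in>H. A \<inter> T \<noteq> {})}"
    by (rule finite_subset[of _ "card ` Pow {1..n}"]) auto
  have "transversal_number {1..n} H \<le> card T"
    unfolding transversal_number_def using TV meet by (intro Min_le[OF fin]) auto
  then show ?thesis using cT by simp
qed

lemma thicket_eq:
  fixes r n :: nat
  assumes r1: "r \<ge> 1" and n3: "n \<ge> 3 * r"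
  shows "thicket_number {1..n} (path_power_adj r) = r"
proof -
  define V where "V = {1..n::nat}"
  define H0 where "H0 = {A. A \<subseteq> V \<and> A \<noteq> {} \<and> induced_connected (path_power_adj r) A \<and> card A \<ge> n + 1 - r}"
  have H0v: "\<forall>A\<in>H0. A \<subseteq> V \<and> A \<noteq> {} \<and> induced_connected (path_power_adj r) A"
    unfolding H0_def by auto
  have H0i: "\<forall>A\<in>H0. \<forall>B\<in>H0. A \<inter> B \<noteq> {}"
  proof (intro ballI notI)
    fix A B assume A: "A \<in> H0" and B: "B \<in> H0" and d: "A \<inter> B = {}"
    have fA: "finite A" "finite B" using A B unfolding H0_def V_def by (auto intro: finite_subset)
    have "card (A \<union> B) = card A + card B" using card_Un_disjoint[OF fA d] .
    moreover have "card (A \<union> B) \<le> card V" using A B unfolding H0_def V_def by (intro card_mono) auto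
    moreover have "card A \<ge> n + 1 - r" "card B \<ge> n + 1 - r" using A B unfolding H0_def by auto
    moreover have "card V = n" unfolding V_def by simp
    ultimately show False using n3 r1 by linarith
  qed
  have low: "transversal_number V H0 \<ge> r"
  proof -
    have fin: "finite {card T | T. T \<subseteq> V \<and> (\<forall>A\<in>H0. A \<inter> T \<noteq> {})}"
      by (rule finite_subset[of _ "card ` Pow V"]) (auto simp: V_def)
    have ne: "{card T | T. T \<subseteq> V \<and> (\<forall>A\<in>H0. A \<inter> T \<noteq> {})} \<noteq> {}"
    proof -
      have "\<forall>A\<in>H0. A \<inter> V \<noteq> {}" using H0v by blast
      then have "card V \<in> {card T | T. T \<subseteq> V \<and> (\<forall>A\<in>H0. A \<inter> T \<noteq> {})}" by blast
      then show ?thesis by blast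
    qed
    have all: "r \<le> c" if cin: "c \<in> {card T | T. T \<subseteq> V \<and> (\<forall>A\<in>H0. A \<inter> T \<noteq> {})}" for c
    proof -
      obtain T where T: "c = card T" "T \<subseteq> V" "\<forall>A\<in>H0. A \<inter> T \<noteq> {}" using cin by blast
      show ?thesis
      proof (rule ccontr)
        assume "\<not> r \<le> c"
        hence cT: "card T < r" using T by simp
        have TI: "T \<inter> {1..n} = T" using T V_def by auto
        have fT: "finite T" using T V_def finite_subset by blast
        have cS: "card ({1..n} - T) = n - card T" using T fT V_def by (simp add: card_Diff_subset)
        have neS: "{1..n} - T \<noteq> {}" proof
          assume "{1..n} - T = {}"
          hence "n - card T = 0" using cS by (metis card.empty)
          thus False using cT n3 by linarith
        qed
        have conn: "induced_connected (path_power_adj r) ({1..n} - T)"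
          by (rule gap_conn) (use TI cT neS in auto)
        have "{1..n} - T \<in> H0" unfolding H0_def V_def using conn neS cS cT by auto
        with T(3) show False by auto
      qed
    qed
    show ?thesis unfolding transversal_number_def by (rule Min.boundedI[OF fin ne]) (rule all)
  qed
  define M where "M = {transversal_number V H | H.
      (\<forall>A\<in>H. A \<subseteq> V \<and> A \<noteq> {} \<and> induced_connected (path_power_adj r) A) \<and>
      (\<forall>A\<in>H. \<forall>B\<in>H. A \<inter> B \<noteq> {})}"
  have up: "c \<le> r" if cM: "c \<in> M" for c
  proof -
    obtain H where "c = transversal_number V H" "\<forall>A\<in>H. A \<subseteq> V \<and> A \<noteq> {} \<and> induced_connected (path_power_adj r) A"
      "\<forall>A\<in>H. \<forall>B\<in>H. A \<inter> B \<noteq> {}" using cM unfolding M_def by blast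
    then show ?thesis using trans_upper[of r n H] r1 n3 unfolding V_def by simp
  qed
  have tM: "transversal_number V H0 \<in> M" using H0v H0i unfolding M_def by blast
  have "transversal_number V H0 = r" using up[OF tM] low by simp
  hence "r \<in> M" using tM by simp
  moreover have "finite M" by (rule finite_subset[of _ "{..r}"]) (use up in auto)
  ultimately have "Max M = r" using up by (intro Max_eqI) auto
  then show ?thesis unfolding thicket_number_def M_def V_def .
qed


lemma block_count:
  fixes x :: "nat \<Rightarrow> real" and n L r m q :: nat
  assumes r1: "r \<ge> 1" and Lr: "L \<ge> r + 1" and m: "m = L + 1 - r" and qL: "q * L \<le> n"
    and feas: "\<forall>i\<in>{1..n}. x i \<ge> 0 \<and> x i \<in> \<int>"
    and cov: "\<forall>S. S \<subseteq> {1..n} \<and> induced_connected (path_power_adj r) S \<and> m \<le> card S \<longrightarrow> sum x S \<ge> 1"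
  shows "sum x {1..n} \<ge> real (q * r)"
proof -
  define T where "T = {i \<in> {1..n}. x i \<noteq> 0}"
  have xT: "x i \<ge> 1" if "i \<in> T" for i
  proof -
    have "x i \<in> \<int>" "x i \<ge> 0" "x i \<noteq> 0" using feas that T_def by auto
    then obtain z where z: "x i = of_int z" by (auto elim: Ints_cases)
    with \<open>x i \<ge> 0\<close> \<open>x i \<noteq> 0\<close> have "z \<ge> 1" by simp
    with z show ?thesis by simp
  qed
  have zero: "x i = 0" if "i \<in> {1..n}" "i \<notin> T" for i using that T_def by auto
  have TV: "T \<subseteq> {1..n}" unfolding T_def by auto
  have finT: "finite T" using TV finite_subset by blast
  have "sum x {1..n} \<ge> sum x T"
    by (rule sum_mono2) (use TV feas in auto)
  moreover have "sum x T \<ge> sum (\<lambda>_. 1) T" by (rule sum_mono) (use xT in auto)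
  ultimately have sT: "sum x {1..n} \<ge> real (card T)" by simp
  define B where "B j = {j*L+1 .. j*L+L}" for j
  have BV: "B j \<subseteq> {1..n}" if "j < q" for j
  proof -
    have "Suc j * L \<le> q * L" using that by (intro mult_le_mono1) simp
    then show ?thesis unfolding B_def using qL by auto
  qed
  have blk: "card (T \<inter> B j) \<ge> r" if jq: "j < q" for j
  proof (rule ccontr)
    assume "\<not> card (T \<inter> B j) \<ge> r"
    hence c: "card (T \<inter> B j) < r" by simp
    define S where "S = B j - T"
    have cB: "card (B j) = L" unfolding B_def by simp
    have "card (B j - T) = card (B j) - card (B j \<inter> T)" by (rule card_Diff_subset_Int) (simp add: B_def)
    hence cS: "card S = L - card (T \<inter> B j)" unfolding S_def using cB by (simp add: Int_commute)
    have cSm: "m \<le> card S" using cS c m Lr by linarith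
    have neS: "S \<noteq> {}"
    proof
      assume "S = {}" hence "card S = 0" by simp
      with cSm m Lr show False by linarith
    qed
    have conn: "induced_connected (path_power_adj r) S"
      unfolding S_def B_def by (rule gap_conn) (use c neS in \<open>auto simp: S_def B_def\<close>)
    have SV: "S \<subseteq> {1..n}" using BV[OF jq] S_def by auto
    have "sum x S \<ge> 1" using cov SV conn cSm by blast
    moreover have "sum x S = 0" by (rule sum.neutral) (use SV zero S_def in auto)
    ultimately show False by simp
  qed
  have disj: "B i \<inter> B j = {}" if "i \<noteq> j" for i j
  proof -
    have aux: "B a \<inter> B b = {}" if "a < b" for a b
    proof -
      have "Suc a * L \<le> b * L" using that by (intro mult_le_mono1) simp
      then show ?thesis unfolding B_def by auto
    qed
    show ?thesis using that aux[of i j] aux[of j i] by (cases "i < j") (auto simp: Int_commute)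
  qed
  have "card (\<Union>j<q. T \<inter> B j) = (\<Sum>j<q. card (T \<inter> B j))"
    by (rule card_UN_disjoint) (use finT disj in auto)
  moreover have "(\<Sum>j<q. card (T \<inter> B j)) \<ge> (\<Sum>j<q. r)" by (rule sum_mono) (use blk in auto)
  moreover have "card (\<Union>j<q. T \<inter> B j) \<le> card T" by (rule card_mono[OF finT]) auto
  ultimately have "q * r \<le> card T" by simp
  then show ?thesis using sT by (meson of_nat_le_iff order_trans)
qed


lemma game_part:
  fixes r n k :: nat
  assumes r1: "r \<ge> 1" and k0: "k > 0" and nk: "n \<ge> k^2 * (r + 1)"
  shows "\<exists>v. coalition_game {1..n} (path_power_adj r) v \<and> simple_game {1..n} v \<and>
          kappa_int {1..n} v / kappa_f {1..n} v \<ge> (1 - 2 / real k) * real r"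
proof -
  define V where "V = {1..n::nat}"
  define L where "L = k * (r + 1)"
  define m where "m = L + 1 - r"
  define q where "q = n div L"
  have Lr: "L \<ge> r + 1" unfolding L_def using k0 mult_le_mono1[of 1 k "r+1"] by simp
  have m2: "m \<ge> 2" unfolding m_def using Lr by simp
  have nkL: "k * L \<le> n" using nk unfolding L_def by (simp add: power2_eq_square algebra_simps)
  have "1 * L \<le> k * L" by (rule mult_le_mono1) (use k0 in simp)
  hence Ln: "L \<le> n" using nkL by (metis mult_1 order_trans)
  have dm: "q * L + n mod L = n" unfolding q_def by (rule div_mult_mod_eq)
  have ml: "n mod L < L" using Lr by simp
  have qL: "q * L \<le> n" using dm by linarith
  have qL2: "n < (q + 1) * L" using dm ml by simp
  define v where "v S = (if S \<subseteq> V \<and> induced_connected (path_power_adj r) S \<and> m \<le> card S then 1::nat else 0)" for S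
  have Vconn: "induced_connected (path_power_adj r) V"
    using gap_conn[of "{}" 1 n r] r1 Ln Lr unfolding V_def by auto
  have mn: "m \<le> n" unfolding m_def using Ln Lr r1 by linarith
  have vV: "v V = 1" unfolding v_def using Vconn mn by (simp add: V_def)
  have game: "coalition_game V (path_power_adj r) v"
    unfolding coalition_game_def
  proof (intro conjI allI impI)
    show "v {} = 0" unfolding v_def using m2 by simp
    show "\<exists>S. S \<subseteq> V \<and> v S \<noteq> 0" using vV by auto
  next
    fix S assume "S \<subseteq> V \<and> S \<noteq> {} \<and> \<not> induced_connected (path_power_adj r) S"
    then show "v S = 0" unfolding v_def by auto
  qed
  have simple: "simple_game V v" unfolding simple_game_def v_def by auto
  have finV: "finite V" unfolding V_def by simp
  have cV: "card V = n" unfolding V_def by simp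
  define KF where "KF = {(\<Sum>i\<in>V. x i) | x :: nat \<Rightarrow> real.
      (\<forall>i\<in>V. x i \<ge> 0) \<and> (\<forall>S. S \<subseteq> V \<longrightarrow> (\<Sum>i\<in>S. x i) \<ge> real (v S))}"
  have x0: "(\<Sum>i\<in>V. (\<lambda>_. 1 / real m) i) \<in> KF"
    unfolding KF_def
  proof (intro CollectI exI conjI ballI allI impI)
    fix S assume SV: "S \<subseteq> V"
    show "(\<Sum>i\<in>S. 1 / real m) \<ge> real (v S)"
    proof (cases "v S = 0")
      case True then show ?thesis by (simp add: sum_nonneg)
    next
      case False
      hence "m \<le> card S" unfolding v_def by (auto split: if_splits)
      hence "real (card S) / real m \<ge> 1" using m2 by simp
      moreover have "v S \<le> 1" unfolding v_def by simp
      ultimately show ?thesis by simp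
    qed
  qed auto
  have bddF: "bdd_below KF" unfolding KF_def
    by (rule bdd_belowI[of _ 0]) (auto intro: sum_nonneg)
  have kf_le: "kappa_f V v \<le> real n / real m"
  proof -
    have "kappa_f V v = Inf KF" unfolding kappa_f_def KF_def ..
    also have "\<dots> \<le> (\<Sum>i\<in>V. (\<lambda>_. 1 / real m) i)" by (rule cInf_lower[OF x0 bddF])
    also have "\<dots> = real n / real m" using cV by simp
    finally show ?thesis .
  qed
  have kf_ge: "kappa_f V v \<ge> 1"
  proof -
    have "1 \<le> Inf KF"
    proof (rule cInf_greatest)
      show "KF \<noteq> {}" using x0 by auto
      fix y assume "y \<in> KF"
      then obtain x where "y = (\<Sum>i\<in>V. x i)" "\<forall>S. S \<subseteq> V \<longrightarrow> (\<Sum>i\<in>S. x i) \<ge> real (v S)"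
        unfolding KF_def by blast
      then show "1 \<le> y" using vV by (metis of_nat_1 order_refl)
    qed
    then show ?thesis unfolding kappa_f_def KF_def .
  qed
  define KI where "KI = {(\<Sum>i\<in>V. x i) | x :: nat \<Rightarrow> real.
      (\<forall>i\<in>V. x i \<ge> 0 \<and> x i \<in> \<int>) \<and> (\<forall>S. S \<subseteq> V \<longrightarrow> (\<Sum>i\<in>S. x i) \<ge> real (v S))}"
  have x1: "(\<Sum>i\<in>V. (\<lambda>_. 1::real) i) \<in> KI"
    unfolding KI_def
  proof (intro CollectI exI conjI ballI allI impI)
    fix S assume SV: "S \<subseteq> V"
    show "(\<Sum>i\<in>S. 1::real) \<ge> real (v S)"
    proof (cases "v S = 0")
      case True then show ?thesis by simp
    next
      case False
      hence "m \<le> card S" unfolding v_def by (auto split: if_splits)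
      hence "real (card S) \<ge> 1" using m2 by simp
      moreover have "v S \<le> 1" unfolding v_def by simp
      ultimately show ?thesis by simp
    qed
  qed auto
  have ki_ge: "kappa_int V v \<ge> real (q * r)"
  proof -
    have "real (q * r) \<le> Inf KI"
    proof (rule cInf_greatest)
      show "KI \<noteq> {}" using x1 by auto
      fix y assume "y \<in> KI"
      then obtain x where y: "y = (\<Sum>i\<in>V. x i)" and f: "\<forall>i\<in>V. x i \<ge> 0 \<and> x i \<in> \<int>"
        and c: "\<forall>S. S \<subseteq> V \<longrightarrow> (\<Sum>i\<in>S. x i) \<ge> real (v S)"
        unfolding KI_def by blast
      have cov: "\<forall>S. S \<subseteq> {1..n} \<and> induced_connected (path_power_adj r) S \<and> m \<le> card S \<longrightarrow> sum x S \<ge> 1"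
      proof (intro allI impI)
        fix S assume S: "S \<subseteq> {1..n} \<and> induced_connected (path_power_adj r) S \<and> m \<le> card S"
        hence "v S = 1" unfolding v_def V_def by simp
        then show "sum x S \<ge> 1" using c S unfolding V_def by (metis of_nat_1)
      qed
      have "sum x {1..n} \<ge> real (q * r)"
        by (rule block_count[OF r1 Lr m_def qL _ cov]) (use f V_def in simp)
      then show "real (q * r) \<le> y" using y V_def by simp
    qed
    then show ?thesis unfolding kappa_int_def KI_def .
  qed
  have key: "real q * real m \<ge> (1 - 2 / real k) * real n"
  proof -
    have rm: "real m = real L + 1 - real r" unfolding m_def using Lr by simp
    have L0: "real L > 0" using Lr by simp
    have h1: "real q \<ge> (real n - real L) / real L"
      using qL2 L0 by (simp add: field_simps) (metis of_nat_add of_nat_mult of_nat_less_iff of_nat_1 less_imp_le distrib_right mult_1)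
    have nL: "real n \<ge> real L" using Ln by simp
    have h2: "real q * real m \<ge> (real n - real L) / real L * real m"
      using h1 m2 by (intro mult_right_mono) auto
    have h3: "(real n - real L) / real L * real m = (real n - real L) - (real n - real L) * (real r - 1) / real L"
      using L0 by (subst rm) (simp add: field_simps)
    have h4: "(real n - real L) * (real r - 1) / real L \<le> real n / real k"
    proof -
      have "(real n - real L) * (real r - 1) \<le> real n * (real r + 1)"
        using nL r1 by (intro mult_mono) auto
      moreover have "real L = real k * (real r + 1)" unfolding L_def by (simp add: algebra_simps)
      ultimately have "(real n - real L) * (real r - 1) / real L \<le> real n * (real r + 1) / (real k * (real r + 1))"
        by (metis divide_right_mono of_nat_0_le_iff)
      also have "\<dots> = real n / real k" using k0 by simp
      finally show ?thesis .
    qed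
    have h5: "real L \<le> real n / real k" using nkL k0 by (simp add: field_simps) (metis of_nat_le_iff of_nat_mult mult.commute)
    have "(1 - 2 / real k) * real n = real n - real n / real k - real n / real k" by (simp add: field_simps)
    then show ?thesis using h2 h3 h4 h5 by linarith
  qed
  have ratio: "kappa_int V v / kappa_f V v \<ge> (1 - 2 / real k) * real r"
  proof -
    have kfp: "kappa_f V v > 0" using kf_ge by simp
    have mp: "real m > 0" using m2 by simp
    have np: "real n > 0" using Ln Lr by simp
    have "kappa_int V v / kappa_f V v \<ge> real (q * r) / kappa_f V v"
      using ki_ge kfp by (intro divide_right_mono) auto
    moreover have "real (q * r) / kappa_f V v \<ge> real (q * r) / (real n / real m)"
      using kf_le kfp np mp by (intro divide_left_mono) auto
    moreover have "real (q * r) / (real n / real m) = real r * (real q * real m) / real n"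
      by (simp add: field_simps)
    moreover have "real r * (real q * real m) / real n \<ge> (1 - 2 / real k) * real r"
    proof -
      have "real r * (real q * real m) \<ge> real r * ((1 - 2 / real k) * real n)"
        using key by (intro mult_left_mono) auto
      then show ?thesis using np by (simp add: field_simps)
    qed
    ultimately show ?thesis by linarith
  qed
  show ?thesis using game simple ratio unfolding V_def by blast
qed

theorem theorem6p3:
  fixes r n :: nat
  assumes "r \<ge> 1" and "n \<ge> 3 * r"
  shows "thicket_number {1..n} (path_power_adj r) = r \<and>
    (\<forall>k::nat. k > 0 \<and> n \<ge> k^2 * (r + 1) \<longrightarrow>
      (\<exists>v. coalition_game {1..n} (path_power_adj r) v \<and> simple_game {1..n} v \<and>
          kappa_int {1..n} v / kappa_f {1..n} v
            \<ge> (1 - 2 / real k) * real (thicket_number {1..n} (path_power_adj r))))"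
  using thicket_eq[OF assms] game_part[OF assms(1)] by simp

end
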